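(* Let $\mathcal X$ be a subset of the nonzero elements of a field and let $f:\mathcal X\to\mathcal X$ be such that the map $$S:\mathcal X\times\mathcal X\to\mathcal X\times\mathcal X,\qquad S(x,y)=(u,v)=\Big(x\,\frac{f(y)}{f(xy)},\;xy\Big)$$ is well defined, and suppose $f(u)f(v)=f(x)$ for all $x,y\in\mathcal X$, where $(u,v)=S(x,y)$. Then $S$ is a pentagon map.
   Context: For a set $Y$ and $S:Y\times Y\to Y\times Y$, define on $Y^3$: $S_{12}=S\times\mathrm{id}_Y$, $S_{23}=\mathrm{id}_Y\times S$, $S_{13}(y_1,y_2,y_3)=(p,y_2,q)$ with $(p,q)=S(y_1,y_3)$. $S$ is a pentagon map if $S_{12}\circ S_{13}\circ S_{23}=S_{23}\circ S_{12}$ (rightmost applied first). *)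

theory Defs
  imports Main
begin

definition S12 :: "('a \<times> 'a \<Rightarrow> 'a \<times> 'a) \<Rightarrow> 'a \<times> 'a \<times> 'a \<Rightarrow> 'a \<times> 'a \<times> 'a" where
  "S12 S = (\<lambda>(y1, y2, y3). (fst (S (y1, y2)), snd (S (y1, y2)), y3))"

definition S23 :: "('a \<times> 'a \<Rightarrow> 'a \<times> 'a) \<Rightarrow> 'a \<times> 'a \<times> 'a \<Rightarrow> 'a \<times> 'a \<times> 'a" where
  "S23 S = (\<lambda>(y1, y2, y3). (y1, fst (S (y2, y3)), snd (S (y2, y3))))"

definition S13 :: "('a \<times> 'a \<Rightarrow> 'a \<times> 'a) \<Rightarrow> 'a \<times> 'a \<times> 'a \<Rightarrow> 'a \<times> 'a \<times> 'a" where
  "S13 S = (\<lambda>(y1, y2, y3). (fst (S (y1, y3)), y2, snd (S (y1, y3))))"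

definition pentagon_map :: "'a set \<Rightarrow> ('a \<times> 'a \<Rightarrow> 'a \<times> 'a) \<Rightarrow> bool" where
  "pentagon_map Y S \<longleftrightarrow>
     (\<forall>x\<in>Y. \<forall>y\<in>Y. S (x, y) \<in> Y \<times> Y) \<and>
     (\<forall>y1\<in>Y. \<forall>y2\<in>Y. \<forall>y3\<in>Y.
        S12 S (S13 S (S23 S (y1, y2, y3))) = S23 S (S12 S (y1, y2, y3)))"

end

theory Submission
  imports Defs
begin

theorem mainTheorem3:
  fixes X :: "'a::field set" and f :: "'a \<Rightarrow> 'a"
  assumes nonzero: "0 \<notin> X"
    and f_maps: "\<forall>x\<in>X. f x \<in> X"
    and well_defined: "\<forall>x\<in>X. \<forall>y\<in>X. x * f y / f (x * y) \<in> X \<and> x * y \<in> X"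
    and cond: "\<forall>x\<in>X. \<forall>y\<in>X. f (x * f y / f (x * y)) * f (x * y) = f x"
  shows "pentagon_map X (\<lambda>(x, y). (x * f y / f (x * y), x * y))"
  unfolding pentagon_map_def
proof (intro conjI ballI)
  fix x y assume "x \<in> X" "y \<in> X"
  then show "(\<lambda>(x, y). (x * f y / f (x * y), x * y)) (x, y) \<in> X \<times> X"
    using well_defined by auto
next
  fix x y z assume x: "x \<in> X" and y: "y \<in> X" and z: "z \<in> X"
  have nz: "\<And>w. w \<in> X \<Longrightarrow> f w \<noteq> 0" using f_maps nonzero by force
  have yz: "y * z \<in> X" and xy: "x * y \<in> X" using well_defined x y z by auto
  have xyz: "x * (y * z) \<in> X" using well_defined x yz by auto
  define a where "a = x * f (y*z) / f (x*(y*z))"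
  define b where "b = y * f z / f (y*z)"
  have ab: "a * b = x * y * f z / f (x * y * z)"
    using nz[OF yz] by (simp add: a_def b_def field_simps)
  have fab: "f (a*b) * f (x*y*z) = f (x*y)" unfolding ab using cond xy z by auto
  have fb: "f b * f (y*z) = f y" unfolding b_def using cond y z by auto
  have xyz': "x*y*z \<in> X" using xyz by (simp add: mult.assoc)
  have fab': "f (a*b) = f (x*y) / f (x*y*z)" using fab nz[OF xyz'] by (simp add: field_simps)
  have fb': "f b = f y / f (y*z)" using fb nz[OF yz] by (simp add: field_simps)
  have key: "a * f b / f (a*b) = x * f y / f (x*y)"
  proof -
    have "a * f b / f (a*b) = a * (f y / f (y*z)) / (f (x*y) / f (x*y*z))"
      by (simp only: fab' fb')
    also have "... = x * f y / f (x*y)"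
      unfolding a_def using nz[OF yz] nz[OF xyz] nz[OF xyz'] nz[OF xy]
      by (simp add: field_simps mult.assoc)
    finally show ?thesis .
  qed
  show "S12 (\<lambda>(x, y). (x * f y / f (x * y), x * y))
          (S13 (\<lambda>(x, y). (x * f y / f (x * y), x * y))
            (S23 (\<lambda>(x, y). (x * f y / f (x * y), x * y)) (x, y, z))) =
         S23 (\<lambda>(x, y). (x * f y / f (x * y), x * y))
          (S12 (\<lambda>(x, y). (x * f y / f (x * y), x * y)) (x, y, z))"
    using key ab nz[OF yz] unfolding S12_def S13_def S23_def
    by (simp add: a_def b_def mult.assoc)
qed

end
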